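(* Let $\bar c$ be a null vertex of $\operatorname{conv}(\mathcal C)$ such that $c=2\bar c-d$ is not a type I vector. Let $u\in\mathcal W$ satisfy $J(\bar u,\bar c)=0$. Then: (a) there exists an index $i$ with $c_i\ne0$ and $-2<c_i<1$; (b) if $c\in\mathbb Z^r$, then there is at most one $u\in\mathcal W$ with $J(\bar u,\bar c)=0$, and hence at most one vertex of type (1A) in $\Delta^{\bar c}$.
   Context: Setting: $G$ compact Lie group, $K\subset G$ closed, $G/K$ connected almost effective, isotropy representation $\mathfrak p=\mathfrak p_1\oplus\cdots\oplus\mathfrak p_r$ ($r\ge2$) with pairwise inequivalent $\mathbb R$-irreducible summands, $d_i=\dim\mathfrak p_i$, $d=(d_1,\dots,d_r)$, $n=\sum d_i$. The scalar curvature of the metric $e^{q_i}Q$ on $\mathfrak p_i$ is $S(q)=\sum_{w\in\mathcal W}A_we^{w\cdot q}$, $\mathcal W\subset\mathbb Z^r$ finite, $A_w\ne0$, each $w$ of type I (one entry $-1$), type II (one entry $1$, two entries $-1$) or type III (one entry $1$, one entry $-2$), other entries $0$; $A_w>0$ for type I and $<0$ otherwise. Assume $\dim\operatorname{conv}(\mathcal W)=r-1$. $J$ is the symmetric bilinear form with $J(p,p)=\frac1{n-1}(\sum p_i)^2-\sum p_i^2/d_i$; null means $J(\bar x,\bar x)=0$. $u=\sum_{\bar c\in\mathcal C}F_{\bar c}e^{\bar c\cdot q}$ ($\mathcal C$ finite, $F_{\bar c}\ne0$) is a superpotential: for every $\xi$, $\sum_{(\bar a,\bar c)\in\mathcal C^2,\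 \bar a+\bar c=\xi}J(\bar a,\bar c)F_{\bar a}F_{\bar c}$ equals $A_w$ if $\xi=d+w$, $w\in\mathcal W$, and $0$ otherwise; $\mathcal C$ lies in $\mathcal H=\{\sum\bar x_i=\frac12(n-1)\}$. For $x$ with $\sum x_i=-1$ write $\bar x=\frac12(d+x)$. For the null vertex $\bar c$ (which lies outside $\operatorname{conv}(\frac12(d+\mathcal W))$), $\Delta^{\bar c}$ is the image of $\operatorname{conv}(\frac12(d+\mathcal W))$ under $\bar z\mapsto$ (intersection of the ray from $\bar c$ through $\bar z$ with a fixed affine hyperplane $H'\subset\mathcal H$ strictly separating $\bar c$ from $\operatorname{conv}(\frac12(d+\mathcal W))$); a vertex $\bar\xi$ of $\Delta^{\bar c}$ is of type (1A) if $J(\bar c,\bar\xi)=0$. *)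

theory Defs
  imports "HOL-Analysis.Analysis"
begin

text \<open>Vectors in R^r are modelled as real^'r for a finite index type 'r (r = CARD('r)).\<close>

definition vsum :: "real^'r \<Rightarrow> real" where
  "vsum p = (\<Sum>i\<in>UNIV. p $ i)"

definition int_vec :: "real^'r \<Rightarrow> bool" where
  "int_vec x \<longleftrightarrow> (\<forall>i. x $ i \<in> \<int>)"

definition typeI :: "real^'r \<Rightarrow> bool" where
  "typeI w \<longleftrightarrow> (\<exists>i. w $ i = -1 \<and> (\<forall>k. k \<noteq> i \<longrightarrow> w $ k = 0))"

definition typeII :: "real^'r \<Rightarrow> bool" where
  "typeII w \<longleftrightarrow> (\<exists>i j k. i \<noteq> j \<and> i \<noteq> k \<and> j \<noteq> k \<and>
      w $ i = 1 \<and> w $ j = -1 \<and> w $ k = -1 \<and>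
      (\<forall>l. l \<noteq> i \<and> l \<noteq> j \<and> l \<noteq> k \<longrightarrow> w $ l = 0))"

definition typeIII :: "real^'r \<Rightarrow> bool" where
  "typeIII w \<longleftrightarrow> (\<exists>i j. i \<noteq> j \<and> w $ i = 1 \<and> w $ j = -2 \<and>
      (\<forall>l. l \<noteq> i \<and> l \<noteq> j \<longrightarrow> w $ l = 0))"

definition ndim :: "real^'r \<Rightarrow> real" where
  "ndim d = vsum d"

definition Jform :: "real^'r \<Rightarrow> real^'r \<Rightarrow> real^'r \<Rightarrow> real" where
  "Jform d p q = vsum p * vsum q / (ndim d - 1) - (\<Sum>i\<in>UNIV. p $ i * q $ i / d $ i)"

definition bar :: "real^'r \<Rightarrow> real^'r \<Rightarrow> real^'r" where
  "bar d x = (1/2) *\<^sub>R (d + x)"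

definition Hplane :: "real^'r \<Rightarrow> (real^'r) set" where
  "Hplane d = {x. vsum x = (ndim d - 1) / 2}"

text \<open>Standing assumptions on (d, W, A) coming from the scalar curvature
  S(q) = sum_w A_w e^{w.q}.\<close>
definition scal_data :: "real^'r \<Rightarrow> (real^'r) set \<Rightarrow> (real^'r \<Rightarrow> real) \<Rightarrow> bool" where
  "scal_data d W A \<longleftrightarrow>
     CARD('r) \<ge> 2 \<and>
     (\<forall>i. d $ i \<in> \<nat> \<and> d $ i \<ge> 1) \<and>
     finite W \<and>
     (\<forall>w\<in>W. int_vec w \<and> A w \<noteq> 0 \<and> (typeI w \<or> typeII w \<or> typeIII w)) \<and>
     (\<forall>w\<in>W. typeI w \<longrightarrow> A w > 0) \<and>
     (\<forall>w\<in>W. \<not> typeI w \<longrightarrow> A w < 0) \<and>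
     aff_dim (convex hull W) = int CARD('r) - 1"

text \<open>u = sum_{c in C} F_c e^{c.q} is a superpotential (with C in H).\<close>
definition superpotential ::
  "real^'r \<Rightarrow> (real^'r) set \<Rightarrow> (real^'r \<Rightarrow> real) \<Rightarrow> (real^'r) set \<Rightarrow> (real^'r \<Rightarrow> real) \<Rightarrow> bool" where
  "superpotential d W A C F \<longleftrightarrow>
     finite C \<and> (\<forall>c\<in>C. F c \<noteq> 0) \<and> C \<subseteq> Hplane d \<and>
     (\<forall>\<xi>. (\<Sum>p\<in>{p\<in>C \<times> C. fst p + snd p = \<xi>}. Jform d (fst p) (snd p) * F (fst p) * F (snd p))
            = (if \<exists>w\<in>W. \<xi> = d + w then A (\<xi> - d) else 0))"

text \<open>Admissible H' = {x in H. a.x = beta}: a genuine affine hyperplane of H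
  (a not parallel to (1,...,1)) strictly separating cbar from conv(bar(d + W)).\<close>
definition sep_hyperplane ::
  "real^'r \<Rightarrow> (real^'r) set \<Rightarrow> real^'r \<Rightarrow> real^'r \<Rightarrow> real \<Rightarrow> bool" where
  "sep_hyperplane d W cb a \<beta> \<longleftrightarrow>
     (\<forall>t::real. a \<noteq> t *\<^sub>R (\<chi> i. 1)) \<and>
     a \<bullet> cb < \<beta> \<and> (\<forall>z\<in>convex hull (bar d ` W). \<beta> < a \<bullet> z)"

definition cproj :: "real^'r \<Rightarrow> real^'r \<Rightarrow> real \<Rightarrow> real^'r \<Rightarrow> real^'r" where
  "cproj cb a \<beta> z = cb + ((\<beta> - a \<bullet> cb) / (a \<bullet> z - a \<bullet> cb)) *\<^sub>R (z - cb)"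

definition Delta :: "real^'r \<Rightarrow> (real^'r) set \<Rightarrow> real^'r \<Rightarrow> real^'r \<Rightarrow> real \<Rightarrow> (real^'r) set" where
  "Delta d W cb a \<beta> = cproj cb a \<beta> ` (convex hull (bar d ` W))"

end

theory Submission
  imports Defs
begin


lemma vsum_add: "vsum (x + y) = vsum x + vsum (y::real^'r)"
  by (simp add: vsum_def sum.distrib)
lemma vsum_scale: "vsum (a *\<^sub>R (x::real^'r)) = a * vsum x"
  by (simp add: vsum_def sum_distrib_left)
lemma vsum_diff: "vsum (x - y) = vsum x - vsum (y::real^'r)"
  by (simp add: vsum_def sum_subtractf)

lemma vsum_one: "(\<forall>l. l \<noteq> i \<longrightarrow> (x::real^'r) $ l = 0) \<Longrightarrow> vsum x = x $ i"
  unfolding vsum_def by (subst sum.remove[of _ i]) auto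

lemma vsum_two: "i \<noteq> j \<Longrightarrow> (\<forall>l. l \<noteq> i \<and> l \<noteq> j \<longrightarrow> (x::real^'r) $ l = 0) \<Longrightarrow> vsum x = x $ i + x $ j"
  unfolding vsum_def
  apply (subst sum.remove[of _ i], simp, simp)
  apply (subst sum.remove[of _ j], auto)
  done

lemma vsum_three: "i \<noteq> j \<Longrightarrow> i \<noteq> k \<Longrightarrow> j \<noteq> k \<Longrightarrow> (\<forall>l. l \<noteq> i \<and> l \<noteq> j \<and> l \<noteq> k \<longrightarrow> (x::real^'r) $ l = 0) \<Longrightarrow> vsum x = x $ i + x $ j + x $ k"
  unfolding vsum_def
  apply (subst sum.remove[of _ i], simp, simp)
  apply (subst sum.remove[of _ j], simp, simp)
  apply (subst sum.remove[of _ k], auto)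
  done

lemma type_vsum: "typeI w \<or> typeII w \<or> typeIII w \<Longrightarrow> vsum (w::real^'r) = -1"
  unfolding typeI_def typeII_def typeIII_def
  by (auto simp: vsum_one vsum_two vsum_three)

lemma type_entries: "typeI w \<or> typeII w \<or> typeIII w \<Longrightarrow> (w::real^'r) $ l \<in> {0,1,-1,-2}"
  unfolding typeI_def typeII_def typeIII_def by (elim disjE exE conjE; metis insert_iff)
lemma c_notin_W:
  fixes d cb :: "real^'r"
  assumes data: "scal_data d W A"
    and sp: "superpotential d W A C F"
    and vert: "cb extreme_point_of (convex hull C)"
    and null: "Jform d cb cb = 0"
  shows "2 *\<^sub>R cb - d \<notin> W"
proof
  assume cW: "2 *\<^sub>R cb - d \<in> W"
  have cbC: "cb \<in> C" using vert extreme_point_of_convex_hull by blast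
  have eq: "{p\<in>C \<times> C. fst p + snd p = 2 *\<^sub>R cb} = {(cb,cb)}"
  proof (safe)
    fix a b assume a: "a \<in> C" and b: "b \<in> C" and ab: "fst (a,b) + snd (a,b) = 2 *\<^sub>R cb"
    have m: "midpoint a b = cb" using ab by (simp add: midpoint_def scaleR_2)
    have ah: "a \<in> convex hull C" "b \<in> convex hull C" using a b by (auto intro: hull_inc)
    have "a = b"
    proof (rule ccontr)
      assume "a \<noteq> b"
      then have "cb \<in> open_segment a b" using m midpoint_in_open_segment by metis
      then show False using vert ah unfolding extreme_point_of_def by blast
    qed
    then show "a = cb" "b = cb" using m by (auto simp: midpoint_def scaleR_2[symmetric])
  next
    show "cb \<in> C" by (rule cbC)
    show "cb \<in> C" by (rule cbC)
    show "fst (cb, cb) + snd (cb, cb) = 2 *\<^sub>R cb" by (simp add: scaleR_2)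
  qed
  have "(\<Sum>p\<in>{p\<in>C \<times> C. fst p + snd p = 2 *\<^sub>R cb}. Jform d (fst p) (snd p) * F (fst p) * F (snd p))
        = (if \<exists>w\<in>W. 2 *\<^sub>R cb = d + w then A (2 *\<^sub>R cb - d) else 0)"
    using sp unfolding superpotential_def by blast
  moreover have "\<exists>w\<in>W. 2 *\<^sub>R cb = d + w" using cW by (intro bexI[of _ "2 *\<^sub>R cb - d"]) auto
  moreover have "A (2 *\<^sub>R cb - d) \<noteq> 0" using data cW unfolding scal_data_def by blast
  ultimately show False using null by (simp add: eq)
qed
lemma term_nonneg:
  fixes t s :: real
  assumes "s \<in> {0,1,-1,-2}" "t = 0 \<or> t \<le> -2 \<or> t \<ge> 1"
  shows "t * (t - s) \<ge> 0" and "t * (t - s) = 0 \<Longrightarrow> t = 0 \<or> t = s"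
  using assms by (auto simp: mult_nonneg_nonneg mult_nonpos_nonpos)

lemma arith_a:
  fixes c u d :: "real^'r"
  assumes dpos: "\<And>i. d $ i > 0"
    and sc: "vsum c = -1"
    and cc: "(\<Sum>i\<in>UNIV. c $ i * c $ i / d $ i) = 1"
    and uc: "(\<Sum>i\<in>UNIV. u $ i * c $ i / d $ i) = 1"
    and ut: "typeI u \<or> typeII u \<or> typeIII u"
    and cu: "c \<noteq> u"
  shows "\<exists>i. c $ i \<noteq> 0 \<and> -2 < c $ i \<and> c $ i < 1"
proof (rule ccontr)
  assume nw: "\<not> ?thesis"
  have h: "c $ l = 0 \<or> c $ l \<le> -2 \<or> c $ l \<ge> 1" for l using nw by force
  have ent: "u $ l \<in> {0,1,-1,-2}" for l using type_entries[OF ut] .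
  have z: "(\<Sum>i\<in>UNIV. c $ i * (c $ i - u $ i) / d $ i) = 0"
    using cc uc by (simp add: right_diff_distrib diff_divide_distrib sum_subtractf mult.commute)
  have nn: "\<forall>i\<in>UNIV. c $ i * (c $ i - u $ i) / d $ i \<ge> 0"
    using term_nonneg(1)[OF ent h] dpos by (simp add: less_imp_le)
  have "\<forall>i\<in>UNIV. c $ i * (c $ i - u $ i) / d $ i = 0"
    using z nn by (subst (asm) sum_nonneg_eq_0_iff) auto
  then have cz: "c $ l = 0 \<or> c $ l = u $ l" for l
    using term_nonneg(2)[OF ent h] dpos[of l] by auto
  have cn1: "c $ l \<noteq> -1" for l
  proof
    assume "c $ l = -1" then show False proof - have "\<not> (c $ l \<noteq> 0 \<and> -2 < c $ l \<and> c $ l < 1)" using nw by blast then show False using \<open>c $ l = -1\<close> by simp qed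
  qed
  from ut show False
  proof (elim disjE)
    assume "typeI u"
    then obtain i where ui: "u $ i = -1" "\<forall>k. k \<noteq> i \<longrightarrow> u $ k = 0" unfolding typeI_def by blast
    have "\<forall>l. l \<noteq> i \<longrightarrow> c $ l = 0" using cz ui by metis
    then have "vsum c = c $ i" by (rule vsum_one)
    moreover have "c $ i = 0" using cz[of i] cn1[of i] ui by auto
    ultimately show False using sc by simp
  next
    assume "typeII u"
    then obtain i j k where ui: "i \<noteq> j" "i \<noteq> k" "j \<noteq> k" "u $ i = 1" "u $ j = -1" "u $ k = -1"
      "\<forall>l. l \<noteq> i \<and> l \<noteq> j \<and> l \<noteq> k \<longrightarrow> u $ l = 0" unfolding typeII_def by blast
    have "\<forall>l. l \<noteq> i \<and> l \<noteq> j \<and> l \<noteq> k \<longrightarrow> c $ l = 0" using cz ui by metis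
    then have "vsum c = c $ i + c $ j + c $ k" using ui by (intro vsum_three) auto
    moreover have "c $ j = 0" "c $ k = 0" using cz cn1 ui by metis+
    moreover have "c $ i = 0 \<or> c $ i = 1" using cz[of i] ui by auto
    ultimately show False using sc by auto
  next
    assume "typeIII u"
    then obtain i j where ui: "i \<noteq> j" "u $ i = 1" "u $ j = -2"
      "\<forall>l. l \<noteq> i \<and> l \<noteq> j \<longrightarrow> u $ l = 0" unfolding typeIII_def by blast
    have cl: "\<forall>l. l \<noteq> i \<and> l \<noteq> j \<longrightarrow> c $ l = 0" using cz ui by metis
    then have "vsum c = c $ i + c $ j" using ui by (intro vsum_two) auto
    moreover have "c $ i = 0 \<or> c $ i = 1" "c $ j = 0 \<or> c $ j = -2" using cz ui by metis+
    ultimately have "c $ i = 1" "c $ j = -2" using sc by auto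
    then have "c = u" using cl ui by (metis vec_eq_iff)
    then show False using cu by simp
  qed
qed


lemma int_term:
  fixes t s :: real
  assumes "t \<in> \<int>" "s \<in> {0,1,-1,-2}" "\<not> (s = -2 \<and> t = -1)"
  shows "t * (t - s) \<ge> 0" and "t * (t - s) = 0 \<Longrightarrow> t = 0 \<or> t = s"
proof -
  obtain k where k: "t = of_int k" using assms(1) Ints_cases by blast
  have "k \<le> -2 \<or> k = -1 \<or> k = 0 \<or> k \<ge> 1" by linarith
  then have "t \<le> -2 \<or> t = -1 \<or> t = 0 \<or> t \<ge> 1" using k by auto
  then show "t * (t - s) \<ge> 0" and "t * (t - s) = 0 \<Longrightarrow> t = 0 \<or> t = s"
    using assms(2,3) by (auto simp: mult_nonneg_nonneg mult_nonpos_nonpos)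
qed

lemma sum_zero_terms:
  fixes f :: "'r::finite \<Rightarrow> real"
  assumes "sum f UNIV = 0" "\<And>l. f l \<ge> 0"
  shows "f l = 0"
  using assms by (subst (asm) sum_nonneg_eq_0_iff) auto

lemma int_form:
  fixes c w d :: "real^'r"
  assumes dpos: "\<And>i. d $ i > 0"
    and ci: "int_vec c"
    and sc: "vsum c = -1"
    and z: "(\<Sum>l\<in>UNIV. c $ l * (c $ l - w $ l) / d $ l) = 0"
    and wt: "typeI w \<or> typeII w \<or> typeIII w"
  shows "typeI c \<or> c = w \<or> (\<exists>i j. i \<noteq> j \<and> w $ i = 1 \<and> w $ j = -2 \<and>
            (\<forall>l. l \<noteq> i \<and> l \<noteq> j \<longrightarrow> w $ l = 0) \<and> c $ j = -1)"
proof (cases "\<exists>l. w $ l = -2 \<and> c $ l = -1")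
  case True
  then obtain l where l: "w $ l = -2" "c $ l = -1" by blast
  from wt have "typeIII w"
    unfolding typeI_def typeII_def by (metis l(1) one_neq_neg_numeral zero_neq_neg_numeral neg_numeral_eq_iff numeral_eq_one_iff semiring_norm(85) add.inverse_inverse)
  then obtain i j where ij: "i \<noteq> j" "w $ i = 1" "w $ j = -2" "\<forall>k. k \<noteq> i \<and> k \<noteq> j \<longrightarrow> w $ k = 0"
    unfolding typeIII_def by blast
  have "l = j" using ij l by (metis one_neq_neg_numeral zero_neq_neg_numeral)
  then show ?thesis using ij l by blast
next
  case False
  have ent: "w $ l \<in> {0,1,-1,-2}" for l using type_entries[OF wt] .
  have cI: "c $ l \<in> \<int>" for l using ci unfolding int_vec_def by blast
  have nn: "c $ l * (c $ l - w $ l) / d $ l \<ge> 0" for l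
    using int_term(1)[OF cI ent] False dpos[of l] by (simp add: less_imp_le)
  have cz: "c $ l = 0 \<or> c $ l = w $ l" for l
  proof -
    have "c $ l * (c $ l - w $ l) / d $ l = 0" by (rule sum_zero_terms[OF z nn])
    then show ?thesis using int_term(2)[OF cI ent] False dpos[of l] by auto
  qed
  from wt show ?thesis
  proof (elim disjE)
    assume "typeI w"
    then obtain i where ui: "w $ i = -1" "\<forall>k. k \<noteq> i \<longrightarrow> w $ k = 0" unfolding typeI_def by blast
    have cl: "\<forall>l. l \<noteq> i \<longrightarrow> c $ l = 0" using cz ui by metis
    then have "vsum c = c $ i" by (rule vsum_one)
    then have "c $ i = -1" using sc by simp
    then have "c = w" using cl ui by (metis vec_eq_iff)
    then show ?thesis by simp
  next
    assume "typeII w"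
    then obtain i j k where ui: "i \<noteq> j" "i \<noteq> k" "j \<noteq> k" "w $ i = 1" "w $ j = -1" "w $ k = -1"
      "\<forall>l. l \<noteq> i \<and> l \<noteq> j \<and> l \<noteq> k \<longrightarrow> w $ l = 0" unfolding typeII_def by blast
    have cl: "\<forall>l. l \<noteq> i \<and> l \<noteq> j \<and> l \<noteq> k \<longrightarrow> c $ l = 0" using cz ui by metis
    then have s: "vsum c = c $ i + c $ j + c $ k" using ui by (intro vsum_three) auto
    have a: "c $ i = 0 \<or> c $ i = 1" "c $ j = 0 \<or> c $ j = -1" "c $ k = 0 \<or> c $ k = -1"
      using cz ui by metis+
    show ?thesis
    proof (cases "c $ i = 1")
      case True
      then have "c $ j = -1" "c $ k = -1" using a s sc by auto
      then have "c = w" using True cl ui by (metis vec_eq_iff)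
      then show ?thesis by simp
    next
      case False
      then have ci0: "c $ i = 0" using a by auto
      show ?thesis
      proof (cases "c $ j = -1")
        case True
        then have "c $ k = 0" using a s sc ci0 by auto
        then have "typeI c" unfolding typeI_def using True ci0 cl ui
          by (intro exI[of _ j]) metis
        then show ?thesis by simp
      next
        case False
        then have "c $ j = 0" "c $ k = -1" using a s sc ci0 by auto
        then have "typeI c" unfolding typeI_def using ci0 cl ui
          by (intro exI[of _ k]) metis
        then show ?thesis by simp
      qed
    qed
  next
    assume "typeIII w"
    then obtain i j where ui: "i \<noteq> j" "w $ i = 1" "w $ j = -2"
      "\<forall>l. l \<noteq> i \<and> l \<noteq> j \<longrightarrow> w $ l = 0" unfolding typeIII_def by blast
    have cl: "\<forall>l. l \<noteq> i \<and> l \<noteq> j \<longrightarrow> c $ l = 0" using cz ui by metis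
    then have "vsum c = c $ i + c $ j" using ui by (intro vsum_two) auto
    moreover have "c $ i = 0 \<or> c $ i = 1" "c $ j = 0 \<or> c $ j = -2" using cz ui by metis+
    ultimately have "c $ i = 1" "c $ j = -2" using sc by auto
    then have "c = w" using cl ui by (metis vec_eq_iff)
    then show ?thesis by simp
  qed
qed


lemma sum_split2:
  fixes f :: "'r::finite \<Rightarrow> real"
  assumes "a \<noteq> b"
  shows "sum f UNIV = f a + f b + sum f (UNIV - {a,b})"
proof -
  have "sum f UNIV = f a + sum f (UNIV - {a})" by (subst sum.remove[of _ a]) auto
  also have "sum f (UNIV - {a}) = f b + sum f (UNIV - {a} - {b})"
    using assms by (subst sum.remove[of _ b]) auto
  also have "UNIV - {a} - {b} = UNIV - {a,b}" by auto
  finally show ?thesis by simp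
qed

lemma rest_nonneg:
  fixes f :: "'r::finite \<Rightarrow> real"
  assumes "\<And>l. l \<noteq> a \<Longrightarrow> l \<noteq> b \<Longrightarrow> f l \<ge> 0"
  shows "sum f (UNIV - {a,b}) \<ge> 0"
  using assms by (intro sum_nonneg) auto

lemma rest_zero:
  fixes f :: "'r::finite \<Rightarrow> real"
  assumes "\<And>l. l \<noteq> a \<Longrightarrow> l \<noteq> b \<Longrightarrow> f l \<ge> 0" "sum f (UNIV - {a,b}) = 0"
    "l \<noteq> a" "l \<noteq> b"
  shows "f l = 0"
  using assms by (subst (asm) sum_nonneg_eq_0_iff) auto

lemma sum_supp2:
  fixes f :: "'r::finite \<Rightarrow> real"
  assumes "i \<noteq> j" "\<And>l. l \<noteq> i \<Longrightarrow> l \<noteq> j \<Longrightarrow> f l = 0"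
  shows "sum f UNIV = f i + f j"
  using sum_split2[OF assms(1), of f] assms(2) by simp

lemma sum_supp3:
  fixes f :: "'r::finite \<Rightarrow> real"
  assumes "i \<noteq> j" "i \<noteq> k" "j \<noteq> k" "\<And>l. l \<noteq> i \<Longrightarrow> l \<noteq> j \<Longrightarrow> l \<noteq> k \<Longrightarrow> f l = 0"
  shows "sum f UNIV = f i + f j + f k"
proof -
  have "sum f UNIV = f j + f k + sum f (UNIV - {j,k})" by (rule sum_split2) fact
  also have "sum f (UNIV - {j,k}) = f i + sum f (UNIV - {j,k} - {i})"
    using assms by (subst sum.remove[of _ i]) auto
  also have "sum f (UNIV - {j,k} - {i}) = 0" using assms(4) by (intro sum.neutral) auto
  finally show ?thesis by simp
qed

lemma pair_cases:
  fixes c w w' d :: "real^'r"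
  assumes dpos: "\<And>l. d $ l \<ge> 1"
    and dnat: "\<And>l. d $ l \<in> \<nat>"
    and ci: "int_vec c"
    and sc: "vsum c = -1"
    and cc: "(\<Sum>l\<in>UNIV. c $ l * c $ l / d $ l) = 1"
    and wc: "(\<Sum>l\<in>UNIV. w $ l * c $ l / d $ l) = 1"
    and wc': "(\<Sum>l\<in>UNIV. w' $ l * c $ l / d $ l) = 1"
    and w: "i \<noteq> j" "w $ i = 1" "w $ j = -2" "\<forall>l. l \<noteq> i \<and> l \<noteq> j \<longrightarrow> w $ l = 0" "c $ j = -1"
    and w': "i' \<noteq> j'" "w' $ i' = 1" "w' $ j' = -2" "\<forall>l. l \<noteq> i' \<and> l \<noteq> j' \<longrightarrow> w' $ l = 0" "c $ j' = -1"
  shows "w = w' \<or> (i = i' \<and> j \<noteq> j' \<and> 2 *\<^sub>R c = w + w') \<or> (j = j' \<and> i \<noteq> i' \<and> d $ j \<le> 3)"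
proof -
  have dp: "d $ l > 0" for l using dpos[of l] by linarith
  have cI: "c $ l \<in> \<int>" for l using ci unfolding int_vec_def by blast
  define f where "f l = c $ l * (c $ l - w $ l) / d $ l" for l
  define g where "g l = c $ l * (c $ l - w' $ l) / d $ l" for l
  have fz: "sum f UNIV = 0" using cc wc unfolding f_def
    by (simp add: right_diff_distrib diff_divide_distrib sum_subtractf mult.commute)
  have gz: "sum g UNIV = 0" using cc wc' unfolding g_def
    by (simp add: right_diff_distrib diff_divide_distrib sum_subtractf mult.commute)
  have went: "w $ l \<in> {0,1,-1,-2}" for l using w by (cases "l = i"; cases "l = j") auto
  have went': "w' $ l \<in> {0,1,-1,-2}" for l using w' by (cases "l = i'"; cases "l = j'") auto
  have fnn: "f l \<ge> 0" if "l \<noteq> j" for l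
  proof -
    have "w $ l \<noteq> -2" using w that by (cases "l = i") auto
    then show ?thesis unfolding f_def using int_term(1)[OF cI went] dp[of l] by simp
  qed
  have gnn: "g l \<ge> 0" if "l \<noteq> j'" for l
  proof -
    have "w' $ l \<noteq> -2" using w' that by (cases "l = i'") auto
    then show ?thesis unfolding g_def using int_term(1)[OF cI went'] dp[of l] by simp
  qed
  have fj: "f j = -1 / d $ j" unfolding f_def using w by simp
  have gj': "g j' = -1 / d $ j'" unfolding g_def using w' by simp
  show ?thesis
  proof (cases "j = j'")
    case True
    show ?thesis
    proof (cases "i = i'")
      case True
      then have "w = w'" using \<open>j = j'\<close> w w' by (metis vec_eq_iff)
      then show ?thesis by simp
    next
      case False
      have "d $ j \<le> 3"
      proof (rule ccontr)
        assume "\<not> d $ j \<le> 3"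
        then have dj: "d $ j \<ge> 4"
        proof -
          obtain m where "d $ j = of_nat m" using dnat[of j] Nats_cases by blast
          then show ?thesis using \<open>\<not> d $ j \<le> 3\<close> by simp
        qed
        have "(\<Sum>l\<in>UNIV. w $ l * c $ l / d $ l) = w $ i * c $ i / d $ i + w $ j * c $ j / d $ j"
          using w by (intro sum_supp2) auto
        then have e1: "c $ i / d $ i = 1 - 2 / d $ j" using wc w by simp
        have "(\<Sum>l\<in>UNIV. w' $ l * c $ l / d $ l) = w' $ i' * c $ i' / d $ i' + w' $ j' * c $ j' / d $ j'"
          using w' by (intro sum_supp2) auto
        then have e2: "c $ i' / d $ i' = 1 - 2 / d $ j" using wc' w' \<open>j = j'\<close> by simp
        have h: "2 / d $ j \<le> 1/2" using dj by (simp add: field_simps)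
        have big: "c $ k * c $ k / d $ k \<ge> 1/2" if "c $ k / d $ k = 1 - 2 / d $ j" for k
        proof -
          have q: "c $ k / d $ k \<ge> 1/2" using that h by simp
          then have "c $ k > 0" using dp[of k] by (simp add: divide_pos_pos zero_less_divide_iff)
          moreover obtain z where "c $ k = of_int z" using cI[of k] Ints_cases by blast
          ultimately have "c $ k \<ge> 1" by simp
          have "c $ k * c $ k / d $ k = c $ k * (c $ k / d $ k)" by simp
          also have "\<dots> \<ge> 1 * (c $ k / d $ k)" using \<open>c $ k \<ge> 1\<close> q
            by (intro mult_right_mono) (auto intro: order_trans[OF _ q])
          finally show ?thesis using q by linarith
        qed
        have ii: "i \<noteq> j" "i' \<noteq> j" using w w' \<open>j = j'\<close> by auto
        have "(\<Sum>l\<in>UNIV. c $ l * c $ l / d $ l) = c $ i * c $ i / d $ i + c $ i' * c $ i' / d $ i'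
               + (\<Sum>l\<in>UNIV - {i,i'}. c $ l * c $ l / d $ l)"
          by (rule sum_split2) fact
        moreover have "(\<Sum>l\<in>UNIV - {i,i'}. c $ l * c $ l / d $ l) \<ge> c $ j * c $ j / d $ j"
          using dp ii by (intro member_le_sum) (auto simp: less_imp_le)
        moreover have "c $ j * c $ j / d $ j > 0" using w dp[of j] by simp
        ultimately have "(\<Sum>l\<in>UNIV. c $ l * c $ l / d $ l) > 1" using big[OF e1] big[OF e2] by linarith
        then show False using cc by simp
      qed
      then show ?thesis using True False by simp
    qed
  next
    case False
    have F: "f a + f b \<le> 0" if "a \<noteq> b" "a = j \<or> b = j" for a b
    proof -
      have "sum f UNIV = f a + f b + sum f (UNIV - {a,b})" by (rule sum_split2) fact
      moreover have "sum f (UNIV - {a,b}) \<ge> 0" using fnn that by (intro rest_nonneg) auto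
      ultimately show ?thesis using fz by simp
    qed
    have G: "g a + g b \<le> 0" if "a \<noteq> b" "a = j' \<or> b = j'" for a b
    proof -
      have "sum g UNIV = g a + g b + sum g (UNIV - {a,b})" by (rule sum_split2) fact
      moreover have "sum g (UNIV - {a,b}) \<ge> 0" using gnn that by (intro rest_nonneg) auto
      ultimately show ?thesis using gz by simp
    qed
    have dj: "d $ j > 0" "d $ j' > 0" "d $ i > 0" "d $ i' > 0" using dp by auto
    show ?thesis
    proof (cases "j' = i")
      case True
      have fi: "f i = 2 / d $ i" unfolding f_def using w w' True by simp
      have A1: "2 / d $ j' \<le> 1 / d $ j" using F[of j i] fj fi True w by simp
      show ?thesis
      proof (cases "j = i'")
        case True
        have gi: "g i' = 2 / d $ i'" unfolding g_def using w w' True by simp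
        have "2 / d $ j \<le> 1 / d $ j'" using G[of j' i'] gj' gi True w' by simp
        then have False using A1 dj by (simp add: field_simps)
        then show ?thesis ..
      next
        case False
        have gj: "g j = 1 / d $ j" unfolding g_def using w w' False \<open>j \<noteq> j'\<close> by simp
        have "1 / d $ j \<le> 1 / d $ j'" using G[of j' j] gj' gj \<open>j \<noteq> j'\<close> by simp
        then have False using A1 dj by (simp add: field_simps)
        then show ?thesis ..
      qed
    next
      case ji: False
      have fj': "f j' = 1 / d $ j'" unfolding f_def using w w' ji \<open>j \<noteq> j'\<close> by simp
      have A1: "1 / d $ j' \<le> 1 / d $ j" using F[of j j'] fj fj' \<open>j \<noteq> j'\<close> by simp
      show ?thesis
      proof (cases "j = i'")
        case True
        have gi: "g i' = 2 / d $ i'" unfolding g_def using w w' True by simp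
        have "2 / d $ j \<le> 1 / d $ j'" using G[of j' i'] gj' gi True w' by simp
        then have False using A1 dj by (simp add: field_simps)
        then show ?thesis ..
      next
        case ji': False
        have gj: "g j = 1 / d $ j" unfolding g_def using w w' ji' \<open>j \<noteq> j'\<close> by simp
        have A2: "1 / d $ j \<le> 1 / d $ j'" using G[of j' j] gj' gj \<open>j \<noteq> j'\<close> by simp
        have eqd: "1 / d $ j = 1 / d $ j'" using A1 A2 by simp
        have fr: "sum f (UNIV - {j,j'}) = 0"
          using sum_split2[OF \<open>j \<noteq> j'\<close>, of f] fz fj fj' eqd rest_nonneg[of j j' f] fnn by simp
        have gr: "sum g (UNIV - {j,j'}) = 0"
          using sum_split2[OF \<open>j \<noteq> j'\<close>, of g] gz gj gj' eqd by simp
        have f0: "f l = 0" if "l \<noteq> j" "l \<noteq> j'" for l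
          by (rule rest_zero[OF _ fr that]) (use fnn in auto)
        have g0: "g l = 0" if "l \<noteq> j" "l \<noteq> j'" for l
          by (rule rest_zero[OF _ gr that]) (use gnn in auto)
        have c0: "c $ l = 0" if "l \<noteq> i" "l \<noteq> j" "l \<noteq> j'" for l
          using f0[OF that(2,3)] w that dp[of l] unfolding f_def by simp
        have c0': "c $ l = 0" if "l \<noteq> i'" "l \<noteq> j" "l \<noteq> j'" for l
          using g0[OF that(2,3)] w' that dp[of l] unfolding g_def by simp
        have cii: "c $ i = 0 \<or> c $ i = 1"
          using f0[of i] w ji dp[of i] unfolding f_def by (auto simp: right_diff_distrib)
        show ?thesis
        proof (cases "i = i'")
          case True
          have ne: "i \<noteq> j" "i \<noteq> j'" "j \<noteq> j'" using w ji \<open>j \<noteq> j'\<close> by auto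
          have "vsum c = c $ i + c $ j + c $ j'" unfolding vsum_def
            by (rule sum_supp3[OF ne]) (use c0 in auto)
          then have "c $ i = 1" using sc w w' by simp
          have "2 *\<^sub>R c = w + w'"
            unfolding vec_eq_iff
          proof
            fix l show "(2 *\<^sub>R c) $ l = (w + w') $ l"
              using c0[of l] w w' True ne \<open>c $ i = 1\<close>
              by (cases "l = i"; cases "l = j"; cases "l = j'") auto
          qed
          then show ?thesis using True \<open>j \<noteq> j'\<close> by simp
        next
          case False
          have "c $ i = 0" using c0'[of i] False w ji by auto
          have ne: "i \<noteq> j" "i \<noteq> j'" "j \<noteq> j'" using w ji \<open>j \<noteq> j'\<close> by auto
          have "vsum c = c $ i + c $ j + c $ j'" unfolding vsum_def
            by (rule sum_supp3[OF ne]) (use c0 in auto)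
          then show ?thesis using sc w w' \<open>c $ i = 0\<close> by simp
        qed
      qed
    qed
  qed
qed


lemma type_at_neg2:
  assumes "typeI w \<or> typeII w \<or> typeIII w" "(w::real^'r) $ j = -2" "l \<noteq> j"
  shows "w $ l = 0 \<or> w $ l = 1"
  using assms unfolding typeI_def typeII_def typeIII_def
  by (elim disjE exE conjE) (metis one_neq_neg_numeral zero_neq_neg_numeral neg_numeral_eq_iff
        add.inverse_inverse numeral_eq_one_iff semiring_norm(85))+

lemma parallelogram:
  fixes p q :: "'a::real_inner"
  shows "(norm (p + q))\<^sup>2 + (norm (p - q))\<^sup>2 = 2 * (norm p)\<^sup>2 + 2 * (norm q)\<^sup>2"
  by (simp add: power2_norm_eq_inner inner_add inner_diff algebra_simps)

lemma J_bar:
  fixes d x y :: "real^'r"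
  assumes dpos: "\<And>i. d $ i > 0" and n1: "ndim d \<noteq> 1"
    and sx: "vsum x = -1" and sy: "vsum y = -1"
  shows "Jform d (bar d x) (bar d y) = (1 - (\<Sum>i\<in>UNIV. x $ i * y $ i / d $ i)) / 4"
proof -
  have bx: "vsum (bar d x) = (ndim d - 1)/2" and by': "vsum (bar d y) = (ndim d - 1)/2"
    using sx sy by (simp_all add: bar_def vsum_scale vsum_add ndim_def)
  have e: "(bar d x) $ i * (bar d y) $ i / d $ i
        = (d $ i + x $ i + y $ i + x $ i * y $ i / d $ i) / 4" for i
    using dpos[of i] by (simp add: bar_def field_simps)
  have s: "(\<Sum>i\<in>UNIV. (bar d x) $ i * (bar d y) $ i / d $ i)
     = (ndim d - 1 - 1 + (\<Sum>i\<in>UNIV. x $ i * y $ i / d $ i)) / 4"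
    unfolding e using sx sy
    by (simp add: sum_divide_distrib[symmetric] sum.distrib ndim_def vsum_def)
  show ?thesis unfolding Jform_def bx by' s using n1
    by (simp add: field_simps power2_eq_square)
qed

locale spset =
  fixes d :: "real^'r" and W :: "(real^'r) set" and A :: "real^'r \<Rightarrow> real"
    and C :: "(real^'r) set" and F :: "real^'r \<Rightarrow> real"
  assumes data: "scal_data d W A" and sp: "superpotential d W A C F"
begin

definition X :: "real^'r \<Rightarrow> real^'r" where "X p = 2 *\<^sub>R p - d"

lemma dge1: "d $ l \<ge> 1" using data unfolding scal_data_def by blast
lemma dpos: "d $ l > 0" using dge1[of l] by linarith
lemma dnat: "d $ l \<in> \<nat>" using data unfolding scal_data_def by blast
lemma finW: "finite W" using data unfolding scal_data_def by blast
lemma Wtype: "w \<in> W \<Longrightarrow> typeI w \<or> typeII w \<or> typeIII w" using data unfolding scal_data_def by blast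
lemma AW: "w \<in> W \<Longrightarrow> A w \<noteq> 0" using data unfolding scal_data_def by blast
lemma finC: "finite C" using sp unfolding superpotential_def by blast
lemma FC: "p \<in> C \<Longrightarrow> F p \<noteq> 0" using sp unfolding superpotential_def by blast
lemma CH: "p \<in> C \<Longrightarrow> vsum p = (ndim d - 1) / 2" using sp unfolding superpotential_def Hplane_def by blast

lemma ndim2: "ndim d \<ge> 2"
proof -
  have "ndim d = (\<Sum>i\<in>UNIV. d $ i)" by (simp add: ndim_def vsum_def)
  also have "\<dots> \<ge> (\<Sum>i\<in>(UNIV::'r set). 1)" by (intro sum_mono) (rule dge1)
  finally have "ndim d \<ge> real CARD('r)" by simp
  moreover have "CARD('r) \<ge> 2" using data unfolding scal_data_def by blast
  ultimately show ?thesis by linarith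
qed
lemma n1: "ndim d \<noteq> 1" using ndim2 by simp

lemma vsumX: "p \<in> C \<Longrightarrow> vsum (X p) = -1"
proof -
  assume "p \<in> C"
  then have "vsum p = (ndim d - 1) / 2" by (rule CH)
  then show ?thesis by (simp add: X_def vsum_diff vsum_scale ndim_def)
qed
lemma barX: "bar d (X p) = p" by (simp add: X_def bar_def)
lemma X_inj: "X p = X q \<Longrightarrow> p = q" by (metis barX)

lemma JX: "p \<in> C \<Longrightarrow> q \<in> C \<Longrightarrow> Jform d p q = (1 - (\<Sum>l\<in>UNIV. X p $ l * X q $ l / d $ l)) / 4"
  using J_bar[OF dpos n1 vsumX vsumX, of p q] by (simp add: barX)

lemma coef:
  assumes "(\<Sum>p\<in>{p\<in>C \<times> C. fst p + snd p = \<xi>}. Jform d (fst p) (snd p) * F (fst p) * F (snd p)) \<noteq> 0"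
  shows "\<xi> - d \<in> W"
proof -
  have "(\<Sum>p\<in>{p\<in>C \<times> C. fst p + snd p = \<xi>}. Jform d (fst p) (snd p) * F (fst p) * F (snd p))
        = (if \<exists>w\<in>W. \<xi> = d + w then A (\<xi> - d) else 0)"
    using sp unfolding superpotential_def by blast
  with assms obtain w where "w \<in> W" "\<xi> = d + w" by (auto split: if_splits)
  then show ?thesis by simp
qed

lemma pair_exists:
  assumes "w \<in> W" shows "\<exists>p\<in>C. \<exists>q\<in>C. p + q = d + w"
proof (rule ccontr)
  assume "\<not> ?thesis"
  then have e: "{p\<in>C \<times> C. fst p + snd p = d + w} = {}" by auto
  have "(\<Sum>p\<in>{p\<in>C \<times> C. fst p + snd p = d + w}. Jform d (fst p) (snd p) * F (fst p) * F (snd p))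
        = (if \<exists>w'\<in>W. d + w = d + w' then A (d + w - d) else 0)"
    using sp unfolding superpotential_def by blast
  then have "A w = 0" using assms by (simp add: e)
  then show False using AW assms by blast
qed

lemma single_point:
  assumes a: "a \<in> C" and u: "\<And>p q. p \<in> C \<Longrightarrow> q \<in> C \<Longrightarrow> p + q = 2 *\<^sub>R a \<Longrightarrow> p = a \<and> q = a"
    and J: "Jform d a a \<noteq> 0"
  shows "X a \<in> W"
proof -
  have e: "{p\<in>C \<times> C. fst p + snd p = 2 *\<^sub>R a} = {(a,a)}"
  proof (rule set_eqI, rule iffI)
    fix x assume "x \<in> {p\<in>C \<times> C. fst p + snd p = 2 *\<^sub>R a}"
    then show "x \<in> {(a,a)}" using u[of "fst x" "snd x"] by (cases x) auto
  next
    fix x assume "x \<in> {(a,a)}"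
    then show "x \<in> {p\<in>C \<times> C. fst p + snd p = 2 *\<^sub>R a}" using a by (auto simp: scaleR_2)
  qed
  have "(\<Sum>p\<in>{p\<in>C \<times> C. fst p + snd p = 2 *\<^sub>R a}. Jform d (fst p) (snd p) * F (fst p) * F (snd p)) \<noteq> 0"
    using J FC[OF a] by (simp add: e)
  then have "2 *\<^sub>R a - d \<in> W" by (rule coef)
  then show ?thesis by (simp add: X_def)
qed

lemma Jsym: "Jform d p q = Jform d q p"
  unfolding Jform_def by (simp add: mult.commute)

lemma two_point:
  assumes a: "a \<in> C" and b: "b \<in> C" and ab: "a \<noteq> b"
    and u: "\<And>p q. p \<in> C \<Longrightarrow> q \<in> C \<Longrightarrow> p + q = a + b \<Longrightarrow> (p = a \<and> q = b) \<or> (p = b \<and> q = a)"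
    and J: "Jform d a b \<noteq> 0"
  shows "a + b - d \<in> W"
proof -
  have e: "{p\<in>C \<times> C. fst p + snd p = a + b} = {(a,b),(b,a)}"
  proof (rule set_eqI, rule iffI)
    fix x assume "x \<in> {p\<in>C \<times> C. fst p + snd p = a + b}"
    then show "x \<in> {(a,b),(b,a)}" using u[of "fst x" "snd x"] by (cases x) auto
  next
    fix x assume "x \<in> {(a,b),(b,a)}"
    then show "x \<in> {p\<in>C \<times> C. fst p + snd p = a + b}" using a b by (auto simp: add.commute)
  qed
  have "(\<Sum>p\<in>{p\<in>C \<times> C. fst p + snd p = a + b}. Jform d (fst p) (snd p) * F (fst p) * F (snd p))
        = 2 * (Jform d a b * F a * F b)"
    using ab by (simp add: e Jsym mult.commute mult.left_commute)
  also have "\<dots> \<noteq> 0" using J FC[OF a] FC[OF b] by simp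
  finally show ?thesis by (rule coef)
qed

lemma face_lemma:
  assumes G: "G \<subseteq> C" "G \<noteq> {}"
    and face: "\<And>p q a. p \<in> C \<Longrightarrow> q \<in> C \<Longrightarrow> a \<in> G \<Longrightarrow> p + q = 2 *\<^sub>R a \<Longrightarrow> p \<in> G \<and> q \<in> G"
  shows "\<exists>a\<in>G. \<forall>p q. p \<in> C \<longrightarrow> q \<in> C \<longrightarrow> p + q = 2 *\<^sub>R a \<longrightarrow> p = a \<and> q = a"
proof -
  have fG: "finite G" using G finC finite_subset by blast
  define M where "M = Max (norm ` G)"
  have "M \<in> norm ` G" unfolding M_def using fG G by (intro Max_in) auto
  then obtain a where a: "a \<in> G" "norm a = M" by auto
  have le: "norm b \<le> norm a" if "b \<in> G" for b
    using that fG a(2) unfolding M_def by simp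
  show ?thesis
  proof (intro bexI[OF _ a(1)] allI impI)
    fix p q assume pq: "p \<in> C" "q \<in> C" "p + q = 2 *\<^sub>R a"
    then have inG: "p \<in> G" "q \<in> G" using face a(1) by blast+
    have "p = q"
    proof (rule ccontr)
      assume "p \<noteq> q"
      then have "(norm (p - q))\<^sup>2 > 0" by simp
      moreover have "(norm (p + q))\<^sup>2 = 4 * (norm a)\<^sup>2" unfolding pq(3) by (simp add: power2_eq_square)
      moreover have "(norm p)\<^sup>2 \<le> (norm a)\<^sup>2" "(norm q)\<^sup>2 \<le> (norm a)\<^sup>2"
        using le[OF inG(1)] le[OF inG(2)] by (auto intro: power_mono)
      ultimately show False using parallelogram[of p q] by linarith
    qed
    then have "2 *\<^sub>R p = 2 *\<^sub>R a" using pq(3) by (simp add: scaleR_2)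
    then have "p = a" by simp
    then show "p = a \<and> q = a" using \<open>p = q\<close> by simp
  qed
qed

end


context spset begin

lemma Xadd: "X p + X q = 2 *\<^sub>R (p + q - d)"
  by (simp add: X_def algebra_simps scaleR_2)

lemma Jdiag_le: "p \<in> C \<Longrightarrow> Jform d p p \<le> (1 - (X p $ j)\<^sup>2 / d $ j) / 4"
proof -
  assume p: "p \<in> C"
  have "(\<Sum>l\<in>UNIV. X p $ l * X p $ l / d $ l) \<ge> X p $ j * X p $ j / d $ j"
    using dpos by (intro member_le_sum) (auto simp: less_imp_le)
  then show ?thesis using JX[OF p p] by (simp add: power2_eq_square)
qed

lemma no_two_III:
  assumes w: "w \<in> W" "i \<noteq> j" "w $ i = 1" "w $ j = -2" "\<forall>l. l \<noteq> i \<and> l \<noteq> j \<longrightarrow> w $ l = 0"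
    and w': "w' \<in> W" "i' \<noteq> j" "w' $ i' = 1" "w' $ j = -2" "\<forall>l. l \<noteq> i' \<and> l \<noteq> j \<longrightarrow> w' $ l = 0"
    and ii: "i \<noteq> i'" and dj: "d $ j \<le> 3"
  shows False
proof -
  have djp: "d $ j > 0" by (rule dpos)
  obtain p0 q0 where pq0: "p0 \<in> C" "q0 \<in> C" "p0 + q0 = d + w" using pair_exists[OF w(1)] by blast
  have X0: "X p0 + X q0 = 2 *\<^sub>R w" using pq0(3) by (simp add: Xadd)
  have Cne: "C \<noteq> {}" using pq0 by blast
  define m where "m = Min ((\<lambda>p. X p $ j) ` C)"
  have minle: "m \<le> X p $ j" if "p \<in> C" for p unfolding m_def using finC that by simp
  have "(X p0 + X q0) $ j = (2 *\<^sub>R w) $ j" using X0 by simp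
  then have "X p0 $ j + X q0 $ j = -4" using w(4) by simp
  then have m2: "m \<le> -2" using minle[OF pq0(1)] minle[OF pq0(2)] by linarith
  have hj: "X p $ j \<ge> -2" if "p \<in> C" for p
  proof -
    have "m = -2"
    proof (rule ccontr)
      assume "m \<noteq> -2"
      then have mlt: "m < -2" using m2 by simp
      define G1 where "G1 = {a\<in>C. X a $ j = m}"
      have "m \<in> (\<lambda>p. X p $ j) ` C" unfolding m_def using finC Cne by (intro Min_in) auto
      then have G1ne: "G1 \<noteq> {}" unfolding G1_def by auto
      have "\<exists>a\<in>G1. \<forall>p q. p \<in> C \<longrightarrow> q \<in> C \<longrightarrow> p + q = 2 *\<^sub>R a \<longrightarrow> p = a \<and> q = a"
      proof (rule face_lemma)
        show "G1 \<subseteq> C" unfolding G1_def by auto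
        show "G1 \<noteq> {}" by fact
        fix p q a assume h: "p \<in> C" "q \<in> C" "a \<in> G1" "p + q = 2 *\<^sub>R a"
        have "X p + X q = 2 *\<^sub>R (p + q - d)" by (rule Xadd)
        also have "\<dots> = 2 *\<^sub>R X a" using h(4) by (simp add: X_def)
        finally have "X p + X q = 2 *\<^sub>R X a" .
        then have "(X p + X q) $ j = (2 *\<^sub>R X a) $ j" by simp
        then have "X p $ j + X q $ j = 2 * m" using h(3) unfolding G1_def by simp
        then have "X p $ j = m" "X q $ j = m" using minle[OF h(1)] minle[OF h(2)] by linarith+
        then show "p \<in> G1 \<and> q \<in> G1" using h(1,2) unfolding G1_def by simp
      qed
      then obtain a where a: "a \<in> G1" "\<And>p q. p \<in> C \<Longrightarrow> q \<in> C \<Longrightarrow> p + q = 2 *\<^sub>R a \<Longrightarrow> p = a \<and> q = a" by blast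
      have aC: "a \<in> C" and am: "X a $ j = m" using a(1) unfolding G1_def by auto
      have "(m - 2) * (m + 2) > 0" using mlt by (intro mult_neg_neg) auto
      then have "m\<^sup>2 > 4" by (simp add: power2_eq_square algebra_simps)
      then have "m\<^sup>2 / d $ j > 1" using dj djp by (simp add: less_divide_eq)
      then have "Jform d a a < 0" using Jdiag_le[OF aC, of j] am by simp
      then have "Jform d a a \<noteq> 0" by simp
      then have "X a \<in> W" using single_point[OF aC] a(2) by blast
      then have "X a $ j \<in> {0,1,-1,-2}" by (rule type_entries[OF Wtype])
      then show False using am mlt by auto
    qed
    then show ?thesis using minle[OF that] by simp
  qed
  have pairj: "X p $ j = -2 \<and> X q $ j = -2" if "p \<in> C" "q \<in> C" "X p $ j + X q $ j = -4" for p q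
    using hj[OF that(1)] hj[OF that(2)] that(3) by linarith
  have nonneg: "X p $ l \<ge> 0" if p: "p \<in> C" "X p $ j = -2" and l: "l \<noteq> j" for p l
  proof (rule ccontr)
    assume neg: "\<not> X p $ l \<ge> 0"
    define G1 where "G1 = {a\<in>C. X a $ j = -2}"
    have fG1: "finite G1" unfolding G1_def using finC by simp
    have pG1: "p \<in> G1" unfolding G1_def using p by simp
    define \<mu> where "\<mu> = Min ((\<lambda>a. X a $ l) ` G1)"
    have mule: "\<mu> \<le> X a $ l" if "a \<in> G1" for a unfolding \<mu>_def using fG1 that by simp
    have mu0: "\<mu> < 0" using mule[OF pG1] neg by linarith
    define G2 where "G2 = {a\<in>G1. X a $ l = \<mu>}"
    have "\<mu> \<in> (\<lambda>a. X a $ l) ` G1" unfolding \<mu>_def using fG1 pG1 by (intro Min_in) auto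
    then have G2ne: "G2 \<noteq> {}" unfolding G2_def by auto
    have "\<exists>a\<in>G2. \<forall>p q. p \<in> C \<longrightarrow> q \<in> C \<longrightarrow> p + q = 2 *\<^sub>R a \<longrightarrow> p = a \<and> q = a"
    proof (rule face_lemma)
      show "G2 \<subseteq> C" unfolding G2_def G1_def by auto
      show "G2 \<noteq> {}" by fact
      fix p q a assume h: "p \<in> C" "q \<in> C" "a \<in> G2" "p + q = 2 *\<^sub>R a"
      have "X p + X q = 2 *\<^sub>R (p + q - d)" by (rule Xadd)
      also have "\<dots> = 2 *\<^sub>R X a" using h(4) by (simp add: X_def)
      finally have e: "X p + X q = 2 *\<^sub>R X a" .
      have aj: "X a $ j = -2" "X a $ l = \<mu>" "a \<in> G1" using h(3) unfolding G2_def G1_def by auto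
      have "(X p + X q) $ j = (2 *\<^sub>R X a) $ j" using e by simp
      then have "X p $ j + X q $ j = -4" using aj by simp
      then have pj: "X p $ j = -2" "X q $ j = -2" using pairj[OF h(1,2)] by auto
      then have pqG1: "p \<in> G1" "q \<in> G1" using h(1,2) unfolding G1_def by auto
      have "(X p + X q) $ l = (2 *\<^sub>R X a) $ l" using e by simp
      then have "X p $ l + X q $ l = 2 * \<mu>" using aj by simp
      then have "X p $ l = \<mu>" "X q $ l = \<mu>" using mule[OF pqG1(1)] mule[OF pqG1(2)] by linarith+
      then show "p \<in> G2 \<and> q \<in> G2" using pqG1 unfolding G2_def by simp
    qed
    then obtain a where a: "a \<in> G2" "\<And>p q. p \<in> C \<Longrightarrow> q \<in> C \<Longrightarrow> p + q = 2 *\<^sub>R a \<Longrightarrow> p = a \<and> q = a" by blast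
    have aC: "a \<in> C" and aj: "X a $ j = -2" and al: "X a $ l = \<mu>" using a(1) unfolding G2_def G1_def by auto
    have "4 / d $ j > 1" using dj djp by (simp add: less_divide_eq)
    then have "Jform d a a < 0" using Jdiag_le[OF aC, of j] aj by (simp add: power2_eq_square)
    then have "Jform d a a \<noteq> 0" by simp
    then have "X a \<in> W" using single_point[OF aC] a(2) by blast
    then have "X a $ l = 0 \<or> X a $ l = 1" using type_at_neg2[OF Wtype aj l] by blast
    then show False using al mu0 by auto
  qed
  have realize: "\<exists>p\<in>C. X p = v" if v: "v \<in> W" "k \<noteq> j" "v $ k = 1" "v $ j = -2" "\<forall>l. l \<noteq> k \<and> l \<noteq> j \<longrightarrow> v $ l = 0" for v k
  proof -
    obtain p q where pq: "p \<in> C" "q \<in> C" "p + q = d + v" using pair_exists[OF v(1)] by blast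
    have e: "X p + X q = 2 *\<^sub>R v" using pq(3) by (simp add: Xadd)
    have "(X p + X q) $ j = (2 *\<^sub>R v) $ j" using e by simp
    then have "X p $ j + X q $ j = -4" using v(4) by simp
    then have pj: "X p $ j = -2" "X q $ j = -2" using pairj[OF pq(1,2)] by auto
    have z: "X p $ l = 0" if "l \<noteq> k" "l \<noteq> j" for l
    proof -
      have "(X p + X q) $ l = (2 *\<^sub>R v) $ l" using e by simp
      then have "X p $ l + X q $ l = 0" using v(5) that by simp
      then show ?thesis using nonneg[OF pq(1) pj(1) that(2)] nonneg[OF pq(2) pj(2) that(2)] by linarith
    qed
    have "vsum (X p) = X p $ k + X p $ j" using z v(2) by (intro vsum_two) auto
    then have "X p $ k = 1" using vsumX[OF pq(1)] pj by simp
    have "X p = v" unfolding vec_eq_iff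
    proof
      fix l show "X p $ l = v $ l"
        using z[of l] v \<open>X p $ k = 1\<close> pj by (cases "l = k"; cases "l = j") auto
    qed
    then show ?thesis using pq(1) by blast
  qed
  obtain p where p: "p \<in> C" "X p = w" using realize[OF w] by blast
  obtain p' where p': "p' \<in> C" "X p' = w'" using realize[OF w'] by blast
  have ij: "i \<noteq> j" "i' \<noteq> j" using w w' by auto
  have supp: "X a $ i + X a $ i' = 1" "X a $ i \<ge> 0" "X a $ i' \<ge> 0"
    if "a \<in> C" "X a $ j = -2" "\<forall>l. l \<noteq> i \<and> l \<noteq> i' \<and> l \<noteq> j \<longrightarrow> X a $ l = 0" for a
  proof -
    have "vsum (X a) = X a $ i + X a $ i' + X a $ j" using that(3) ii ij by (intro vsum_three) auto
    then show "X a $ i + X a $ i' = 1" using vsumX[OF that(1)] that(2) by simp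
    show "X a $ i \<ge> 0" "X a $ i' \<ge> 0" using nonneg[OF that(1,2)] ij by auto
  qed
  have isp: "a = p" if "a \<in> C" "X a $ j = -2" "\<forall>l. l \<noteq> i \<and> l \<noteq> i' \<and> l \<noteq> j \<longrightarrow> X a $ l = 0" "X a $ i = 1" for a
  proof -
    have "X a $ i' = 0" using supp[OF that(1-3)] that(4) by simp
    have "X a = w" unfolding vec_eq_iff
    proof
      fix l show "X a $ l = w $ l"
        using that(2-4) \<open>X a $ i' = 0\<close> w by (cases "l = i"; cases "l = j"; cases "l = i'") auto
    qed
    then show ?thesis using p(2) X_inj by simp
  qed
  define E where "E = {a\<in>C. X a $ j = -2 \<and> (\<forall>l. l \<noteq> i \<and> l \<noteq> i' \<and> l \<noteq> j \<longrightarrow> X a $ l = 0) \<and> X a $ i < 1}"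
  have fE: "finite E" unfolding E_def using finC by simp
  have p'E: "p' \<in> E" unfolding E_def using p' w' ii ij by auto
  define s where "s = Max ((\<lambda>a. X a $ i) ` E)"
  have sge: "X a $ i \<le> s" if "a \<in> E" for a unfolding s_def using fE that by simp
  have "s \<in> (\<lambda>a. X a $ i) ` E" unfolding s_def using fE p'E by (intro Max_in) auto
  then obtain q where qE: "q \<in> E" "X q $ i = s" by auto
  have qC: "q \<in> C" and qj: "X q $ j = -2" and qz: "\<forall>l. l \<noteq> i \<and> l \<noteq> i' \<and> l \<noteq> j \<longrightarrow> X q $ l = 0"
    and s1: "s < 1" using qE unfolding E_def by auto
  have s0: "s \<ge> 0" using supp(2)[OF qC qj qz] qE(2) by simp
  have pq: "p \<noteq> q" using p(2) qE(2) s1 w(3) by auto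
  have uniq: "(p1 = p \<and> p2 = q) \<or> (p1 = q \<and> p2 = p)" if h: "p1 \<in> C" "p2 \<in> C" "p1 + p2 = p + q" for p1 p2
  proof -
    have "X p1 + X p2 = 2 *\<^sub>R (p1 + p2 - d)" by (rule Xadd)
    also have "\<dots> = X p + X q" using h(3) by (simp add: Xadd)
    finally have e: "X p1 + X p2 = w + X q" using p(2) by simp
    have "(X p1 + X p2) $ j = (w + X q) $ j" using e by simp
    then have "X p1 $ j + X p2 $ j = -4" using w(4) qj by simp
    then have pj: "X p1 $ j = -2" "X p2 $ j = -2" using pairj[OF h(1,2)] by auto
    have z: "X p1 $ l = 0 \<and> X p2 $ l = 0" if "l \<noteq> i" "l \<noteq> i'" "l \<noteq> j" for l
    proof -
      have "(X p1 + X p2) $ l = (w + X q) $ l" using e by simp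
      then have "X p1 $ l + X p2 $ l = 0" using w(5) qz that by simp
      then show ?thesis using nonneg[OF h(1) pj(1) that(3)] nonneg[OF h(2) pj(2) that(3)] by linarith
    qed
    have z1: "\<forall>l. l \<noteq> i \<and> l \<noteq> i' \<and> l \<noteq> j \<longrightarrow> X p1 $ l = 0" using z by blast
    have z2: "\<forall>l. l \<noteq> i \<and> l \<noteq> i' \<and> l \<noteq> j \<longrightarrow> X p2 $ l = 0" using z by blast
    have "(X p1 + X p2) $ i = (w + X q) $ i" using e by simp
    then have si: "X p1 $ i + X p2 $ i = 1 + s" using w(3) qE(2) by simp
    have le1: "X p1 $ i \<le> 1" "X p2 $ i \<le> 1" using supp[OF h(1) pj(1) z1] supp[OF h(2) pj(2) z2] by linarith+
    show ?thesis
    proof (cases "X p1 $ i = 1")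
      case True
      then have "p1 = p" using isp[OF h(1) pj(1) z1] by simp
      then have "p2 = q" using h(3) by simp
      then show ?thesis using \<open>p1 = p\<close> by simp
    next
      case False
      then have "p1 \<in> E" unfolding E_def using h(1) pj(1) z1 le1(1) by auto
      then have "X p1 $ i \<le> s" by (rule sge)
      then have "X p2 $ i = 1" using si le1(2) by linarith
      then have "p2 = p" using isp[OF h(2) pj(2) z2] by simp
      then have "p1 = q" using h(3) by (metis add.commute add_right_cancel)
      then show ?thesis using \<open>p2 = p\<close> by simp
    qed
  qed
  have "(\<Sum>l\<in>UNIV. X p $ l * X q $ l / d $ l) = X p $ i * X q $ i / d $ i + X p $ j * X q $ j / d $ j"
    using w(5) p(2) ij(1) by (intro sum_supp2) auto
  also have "\<dots> = s / d $ i + 4 / d $ j" using p(2) w qE(2) qj by simp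
  finally have Jpq: "Jform d p q = (1 - (s / d $ i + 4 / d $ j)) / 4" using JX[OF p(1) qC] by simp
  have "4 / d $ j > 1" using dj djp by (simp add: less_divide_eq)
  moreover have "s / d $ i \<ge> 0" using s0 dpos[of i] by simp
  ultimately have "Jform d p q < 0" using Jpq by simp
  then have "Jform d p q \<noteq> 0" by simp
  then have vW: "p + q - d \<in> W" using two_point[OF p(1) qC pq] uniq by blast
  have "2 *\<^sub>R (p + q - d) = X p + X q" by (simp add: Xadd)
  then have "(2 *\<^sub>R (p + q - d)) $ j = (X p + X q) $ j" "(2 *\<^sub>R (p + q - d)) $ i = (X p + X q) $ i" by simp_all
  then have vj: "(p + q - d) $ j = -2" and vi: "(p + q - d) $ i = (1 + s) / 2"
    using p(2) w(3,4) qj qE(2) by simp_all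
  have "(p + q - d) $ i = 0 \<or> (p + q - d) $ i = 1" by (rule type_at_neg2[OF Wtype[OF vW] vj ij(1)])
  then show False using vi s0 s1 by auto
qed
end


lemma cproj_conv:
  fixes cb a :: "real^'r" and S :: "(real^'r) set"
  assumes sep: "a \<bullet> cb < \<beta>" "\<forall>z\<in>convex hull S. \<beta> < a \<bullet> z"
  shows "convex (cproj cb a \<beta> ` (convex hull S))"
proof (rule convexI)
  fix u v :: real
  fix Y1 Y2 assume Y: "Y1 \<in> cproj cb a \<beta> ` (convex hull S)" "Y2 \<in> cproj cb a \<beta> ` (convex hull S)"
    and uv: "0 \<le> u" "0 \<le> v" "u + v = 1"
  from Y obtain z1 z2 where z: "z1 \<in> convex hull S" "z2 \<in> convex hull S"
    "Y1 = cproj cb a \<beta> z1" "Y2 = cproj cb a \<beta> z2" by blast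
  define g where "g = \<beta> - a \<bullet> cb"
  define a1 where "a1 = a \<bullet> z1 - a \<bullet> cb"
  define a2 where "a2 = a \<bullet> z2 - a \<bullet> cb"
  have a1p: "a1 > 0" and a2p: "a2 > 0" using sep z unfolding a1_def a2_def by force+
  define k1 where "k1 = u / a1"
  define k2 where "k2 = v / a2"
  define K where "K = k1 + k2"
  have k1: "k1 \<ge> 0" and k2: "k2 \<ge> 0" using uv a1p a2p unfolding k1_def k2_def by auto
  have Kp: "K > 0"
  proof -
    have "u > 0 \<or> v > 0" using uv by linarith
    then have "k1 > 0 \<or> k2 > 0" using a1p a2p unfolding k1_def k2_def by auto
    then show ?thesis using k1 k2 unfolding K_def by linarith
  qed
  define z where "z = (k1 / K) *\<^sub>R z1 + (k2 / K) *\<^sub>R z2"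
  have zH: "z \<in> convex hull S" unfolding z_def
    by (rule convexD[OF convex_convex_hull z(1,2)]) (use k1 k2 Kp in \<open>auto simp: K_def add_divide_distrib[symmetric]\<close>)
  have az: "a \<bullet> z - a \<bullet> cb = 1 / K"
  proof -
    have s1: "k1 / K + k2 / K = 1" using Kp unfolding K_def by (simp add: add_divide_distrib[symmetric])
    have "a \<bullet> z = (k1 / K) * (a \<bullet> z1) + (k2 / K) * (a \<bullet> z2)"
      unfolding z_def by (simp add: inner_add_right)
    then have "a \<bullet> z - a \<bullet> cb = (k1 / K) * (a \<bullet> z1) + (k2 / K) * (a \<bullet> z2) - (k1 / K + k2 / K) * (a \<bullet> cb)"
      using s1 by simp
    also have "\<dots> = (k1 / K) * a1 + (k2 / K) * a2" unfolding a1_def a2_def by (simp add: algebra_simps)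
    finally have "a \<bullet> z - a \<bullet> cb = (k1 / K) * a1 + (k2 / K) * a2" .
    also have "\<dots> = (u + v) / K" unfolding k1_def k2_def using a1p a2p by (simp add: field_simps add_divide_distrib)
    finally show ?thesis using uv by simp
  qed
  have c1: "Y1 = cb + (g / a1) *\<^sub>R (z1 - cb)" by (simp add: z(3) cproj_def g_def a1_def)
  have c2: "Y2 = cb + (g / a2) *\<^sub>R (z2 - cb)" by (simp add: z(4) cproj_def g_def a2_def)
  have c0: "cproj cb a \<beta> z = cb + (g * K) *\<^sub>R (z - cb)" using az by (simp add: cproj_def g_def)
  have Kne: "K \<noteq> 0" using Kp by simp
  have real: "c + g * K * ((k1 / K) * x1 + (k2 / K) * x2 - c) = u * (c + g / a1 * (x1 - c)) + v * (c + g / a2 * (x2 - c))" for c x1 x2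
  proof -
    have "g * K * ((k1 / K) * x1 + (k2 / K) * x2 - c) = g * (k1 * x1 + k2 * x2 - K * c)"
      using Kne by (simp add: field_simps)
    also have "\<dots> = u * (g / a1 * (x1 - c)) + v * (g / a2 * (x2 - c))"
      unfolding K_def k1_def k2_def using a1p a2p by (simp add: field_simps)
    finally show ?thesis using uv(3) by (simp add: algebra_simps) (metis add.commute distrib_left mult.right_neutral)
  qed
  have "cb + (g * K) *\<^sub>R (z - cb) = u *\<^sub>R Y1 + v *\<^sub>R Y2"
    unfolding c1 c2 vec_eq_iff z_def using real by simp
  then have "cproj cb a \<beta> z = u *\<^sub>R Y1 + v *\<^sub>R Y2" using c0 by simp
  then show "u *\<^sub>R Y1 + v *\<^sub>R Y2 \<in> cproj cb a \<beta> ` (convex hull S)" using zH by (metis image_eqI)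
qed
lemma cproj_comb:
  fixes cb a :: "real^'r" and S :: "(real^'r) set"
  assumes fin: "finite S" and sep: "a \<bullet> cb < \<beta>" "\<forall>z\<in>convex hull S. \<beta> < a \<bullet> z"
    and z: "z \<in> convex hull S"
  shows "cproj cb a \<beta> z \<in> convex hull (cproj cb a \<beta> ` S)"
proof -
  obtain l where l: "\<forall>x\<in>S. 0 \<le> l x" "sum l S = 1" "(\<Sum>x\<in>S. l x *\<^sub>R x) = z"
    using z convex_hull_finite[OF fin] by auto
  define g where "g = \<beta> - a \<bullet> cb"
  define al where "al x = a \<bullet> x - a \<bullet> cb" for x
  have alp: "al x > 0" if "x \<in> convex hull S" for x using sep that unfolding al_def by force
  have alS: "al x > 0" if "x \<in> S" for x by (rule alp[OF hull_inc[OF that]])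
  have alz: "al z = (\<Sum>x\<in>S. l x * al x)"
  proof -
    have "a \<bullet> z = (\<Sum>x\<in>S. l x * (a \<bullet> x))" unfolding l(3)[symmetric] by (simp add: inner_sum_right)
    moreover have "(\<Sum>x\<in>S. l x * (a \<bullet> cb)) = sum l S * (a \<bullet> cb)" by (rule sum_distrib_right[symmetric])
    then have "a \<bullet> cb = (\<Sum>x\<in>S. l x * (a \<bullet> cb))" using l(2) by simp
    ultimately show ?thesis unfolding al_def by (simp add: right_diff_distrib sum_subtractf)
  qed
  have alzp: "al z > 0" by (rule alp[OF z])
  define m where "m x = l x * al x / al z" for x
  have m0: "\<forall>x\<in>S. 0 \<le> m x" using l(1) alS alzp unfolding m_def by (simp add: less_imp_le)
  have "sum m S = (\<Sum>x\<in>S. l x * al x) / al z" unfolding m_def by (rule sum_divide_distrib[symmetric])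
  then have m1: "sum m S = 1" using alzp alz by simp
  have cp: "cproj cb a \<beta> x = cb + (g / al x) *\<^sub>R (x - cb)" for x by (simp add: cproj_def g_def al_def)
  have "(\<Sum>x\<in>S. m x *\<^sub>R cproj cb a \<beta> x) = (\<Sum>x\<in>S. m x *\<^sub>R cb + (l x * g / al z) *\<^sub>R (x - cb))"
  proof (rule sum.cong[OF refl])
    fix x assume "x \<in> S"
    then have "al x \<noteq> 0" using alS[of x] by linarith
    then show "m x *\<^sub>R cproj cb a \<beta> x = m x *\<^sub>R cb + (l x * g / al z) *\<^sub>R (x - cb)"
      unfolding cp m_def by (simp add: scaleR_add_right)
  qed
  also have "\<dots> = (\<Sum>x\<in>S. m x *\<^sub>R cb) + (\<Sum>x\<in>S. (g / al z) *\<^sub>R (l x *\<^sub>R (x - cb)))"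
    by (simp add: sum.distrib mult.commute)
  also have "\<dots> = (sum m S) *\<^sub>R cb + (g / al z) *\<^sub>R (\<Sum>x\<in>S. l x *\<^sub>R (x - cb))"
    by (simp only: scaleR_sum_left scaleR_sum_right)
  also have "(\<Sum>x\<in>S. l x *\<^sub>R (x - cb)) = z - cb"
  proof -
    have "(\<Sum>x\<in>S. l x *\<^sub>R (x - cb)) = (\<Sum>x\<in>S. l x *\<^sub>R x) - (\<Sum>x\<in>S. l x *\<^sub>R cb)"
      by (simp add: scaleR_diff_right sum_subtractf)
    also have "(\<Sum>x\<in>S. l x *\<^sub>R cb) = (sum l S) *\<^sub>R cb" by (simp only: scaleR_sum_left)
    finally show ?thesis using l(2,3) by simp
  qed
  finally have e: "(\<Sum>x\<in>S. m x *\<^sub>R cproj cb a \<beta> x) = cproj cb a \<beta> z" using m1 cp[of z] by simp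
  have "(\<Sum>x\<in>S. m x *\<^sub>R cproj cb a \<beta> x) \<in> convex hull (cproj cb a \<beta> ` S)"
    by (rule convex_sum[OF fin convex_convex_hull m1]) (use m0 in \<open>auto intro: hull_inc\<close>)
  then show ?thesis using e by simp
qed
lemma Jlin: "Jform d p (x + t *\<^sub>R (y - x)) = Jform d p x + t * (Jform d p y - Jform d p x)"
proof -
  have v: "vsum (x + t *\<^sub>R (y - x)) = vsum x + t * (vsum y - vsum x)"
    by (simp add: vsum_def sum.distrib sum_subtractf sum_distrib_left algebra_simps)
  have s: "(\<Sum>i\<in>UNIV. p $ i * (x + t *\<^sub>R (y - x)) $ i / d $ i)
     = (\<Sum>i\<in>UNIV. p $ i * x $ i / d $ i) + t * ((\<Sum>i\<in>UNIV. p $ i * y $ i / d $ i) - (\<Sum>i\<in>UNIV. p $ i * x $ i / d $ i))"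
    by (simp add: sum.distrib sum_subtractf sum_distrib_left algebra_simps add_divide_distrib diff_divide_distrib)
  show ?thesis unfolding Jform_def v s by (simp add: algebra_simps add_divide_distrib diff_divide_distrib)
qed

lemma Delta_extreme:
  fixes d cb a :: "real^'r"
  assumes fW: "finite W" and sh: "sep_hyperplane d W cb a \<beta>"
    and ex: "\<xi> extreme_point_of (Delta d W cb a \<beta>)"
  shows "\<exists>w\<in>W. \<xi> = cproj cb a \<beta> (bar d w)"
proof -
  define S where "S = bar d ` W"
  have fS: "finite S" unfolding S_def using fW by simp
  have sep: "a \<bullet> cb < \<beta>" "\<forall>z\<in>convex hull S. \<beta> < a \<bullet> z" using sh unfolding sep_hyperplane_def S_def by auto
  have D: "Delta d W cb a \<beta> = cproj cb a \<beta> ` (convex hull S)" unfolding Delta_def S_def ..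
  have "\<xi> \<in> Delta d W cb a \<beta>" using ex unfolding extreme_point_of_def by blast
  then obtain z where z: "z \<in> convex hull S" "\<xi> = cproj cb a \<beta> z" unfolding D by blast
  have xh: "\<xi> \<in> convex hull (cproj cb a \<beta> ` S)" using cproj_comb[OF fS sep z(1)] z(2) by simp
  have sub: "convex hull (cproj cb a \<beta> ` S) \<subseteq> Delta d W cb a \<beta>"
    unfolding D by (rule hull_minimal) (use cproj_conv[OF sep] in \<open>auto intro: hull_inc\<close>)
  have "\<xi> extreme_point_of (convex hull (cproj cb a \<beta> ` S))"
    using ex xh sub unfolding extreme_point_of_def by blast
  then have "\<xi> \<in> cproj cb a \<beta> ` S" by (rule extreme_point_of_convex_hull)
  then show ?thesis unfolding S_def by blast
qed


lemma card_subsingleton: "(\<forall>x\<in>S. \<forall>y\<in>S. x = y) \<Longrightarrow> card S \<le> 1"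
proof (cases "S = {}")
  case False
  assume h: "\<forall>x\<in>S. \<forall>y\<in>S. x = y"
  then obtain x where "x \<in> S" using False by blast
  then have "S = {x}" using h by blast
  then show ?thesis by simp
qed simp

context spset begin
lemma mid_contra:
  assumes ex: "cb extreme_point_of (convex hull C)"
    and w: "w1 \<in> W" "w2 \<in> W" and m: "2 *\<^sub>R (2 *\<^sub>R cb - d) = w1 + w2"
  shows "w1 = w2"
proof -
  obtain p q where pq: "p \<in> C" "q \<in> C" "p + q = d + w1" using pair_exists[OF w(1)] by blast
  obtain p' q' where pq': "p' \<in> C" "q' \<in> C" "p' + q' = d + w2" using pair_exists[OF w(2)] by blast
  define b1 where "b1 = (1/2) *\<^sub>R (d + w1)"
  define b2 where "b2 = (1/2) *\<^sub>R (d + w2)"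
  have b1h: "b1 \<in> convex hull C"
  proof -
    have "(1/2) *\<^sub>R p + (1/2) *\<^sub>R q \<in> convex hull C"
      by (rule convexD[OF convex_convex_hull]) (use pq in \<open>auto intro: hull_inc\<close>)
    moreover have "(1/2) *\<^sub>R p + (1/2) *\<^sub>R q = b1" unfolding b1_def pq(3)[symmetric] by (simp add: scaleR_add_right)
    ultimately show ?thesis by simp
  qed
  have b2h: "b2 \<in> convex hull C"
  proof -
    have "(1/2) *\<^sub>R p' + (1/2) *\<^sub>R q' \<in> convex hull C"
      by (rule convexD[OF convex_convex_hull]) (use pq' in \<open>auto intro: hull_inc\<close>)
    moreover have "(1/2) *\<^sub>R p' + (1/2) *\<^sub>R q' = b2" unfolding b2_def pq'(3)[symmetric] by (simp add: scaleR_add_right)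
    ultimately show ?thesis by simp
  qed
  have mid: "midpoint b1 b2 = cb"
  proof -
    have mk: "2 * (2 * cb $ k - d $ k) = w1 $ k + w2 $ k" for k
      using arg_cong[where f="\<lambda>v. v $ k", OF m] by simp
    show ?thesis
    unfolding vec_eq_iff
    proof
      fix k show "midpoint b1 b2 $ k = cb $ k"
        using mk[of k] by (simp add: midpoint_def b1_def b2_def field_simps)
    qed
  qed
  show ?thesis
  proof (rule ccontr)
    assume "w1 \<noteq> w2"
    then have "b1 \<noteq> b2" unfolding b1_def b2_def by simp
    then have "cb \<in> open_segment b1 b2" using mid midpoint_in_open_segment by metis
    then show False using ex b1h b2h unfolding extreme_point_of_def by blast
  qed
qed
end

theorem lemma4p4:
  fixes d :: "real^'r" and W C :: "(real^'r) set"
    and A F :: "real^'r \<Rightarrow> real" and cb u :: "real^'r"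
  assumes data: "scal_data d W A"
    and sp: "superpotential d W A C F"
    and vert: "cb extreme_point_of (convex hull C)"
    and null: "Jform d cb cb = 0"
    and notI: "\<not> typeI (2 *\<^sub>R cb - d)"
    and uW: "u \<in> W"
    and uJ: "Jform d (bar d u) cb = 0"
  shows "(\<exists>i. (2 *\<^sub>R cb - d) $ i \<noteq> 0 \<and> -2 < (2 *\<^sub>R cb - d) $ i \<and> (2 *\<^sub>R cb - d) $ i < 1)
       \<and> (int_vec (2 *\<^sub>R cb - d) \<longrightarrow>
            card {w\<in>W. Jform d (bar d w) cb = 0} \<le> 1 \<and>
            (\<forall>a \<beta>. sep_hyperplane d W cb a \<beta> \<longrightarrow>
               card {\<xi>. \<xi> extreme_point_of (Delta d W cb a \<beta>) \<and> Jform d cb \<xi> = 0} \<le> 1))"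
proof -
  interpret spset d W A C F using data sp by unfold_locales
  define c where "c = 2 *\<^sub>R cb - d"
  have cbC: "cb \<in> C" using vert extreme_point_of_convex_hull by blast
  have cX: "X cb = c" unfolding c_def X_def ..
  have sc: "vsum c = -1" using vsumX[OF cbC] cX by simp
  have bc: "bar d c = cb" using barX[of cb] cX by simp
  have cc: "(\<Sum>l\<in>UNIV. c $ l * c $ l / d $ l) = 1"
    using J_bar[OF dpos n1 sc sc] null bc by simp
  have Jwc: "Jform d (bar d w) cb = (1 - (\<Sum>l\<in>UNIV. w $ l * c $ l / d $ l)) / 4" if "w \<in> W" for w
    using J_bar[OF dpos n1 type_vsum[OF Wtype[OF that]] sc] bc by simp
  have uc: "(\<Sum>l\<in>UNIV. u $ l * c $ l / d $ l) = 1" using Jwc[OF uW] uJ by simp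
  have cnW: "c \<notin> W" unfolding c_def by (rule c_notin_W[OF data sp vert null])
  have cu: "c \<noteq> u" using cnW uW by blast
  have partA: "\<exists>i. c $ i \<noteq> 0 \<and> -2 < c $ i \<and> c $ i < 1"
    by (rule arith_a[OF dpos sc cc uc Wtype[OF uW] cu])
  have partB: "card {w\<in>W. Jform d (bar d w) cb = 0} \<le> 1 \<and>
            (\<forall>a \<beta>. sep_hyperplane d W cb a \<beta> \<longrightarrow>
               card {\<xi>. \<xi> extreme_point_of (Delta d W cb a \<beta>) \<and> Jform d cb \<xi> = 0} \<le> 1)"
    if ci: "int_vec c"
  proof -
    have III: "\<exists>i j. i \<noteq> j \<and> w $ i = 1 \<and> w $ j = -2 \<and> (\<forall>l. l \<noteq> i \<and> l \<noteq> j \<longrightarrow> w $ l = 0) \<and> c $ j = -1"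
      if "w \<in> W" "Jform d (bar d w) cb = 0" for w
    proof -
      have wc: "(\<Sum>l\<in>UNIV. w $ l * c $ l / d $ l) = 1" using Jwc[OF that(1)] that(2) by simp
      have z: "(\<Sum>l\<in>UNIV. c $ l * (c $ l - w $ l) / d $ l) = 0" using cc wc
        by (simp add: right_diff_distrib diff_divide_distrib sum_subtractf mult.commute)
      have "typeI c \<or> c = w \<or> (\<exists>i j. i \<noteq> j \<and> w $ i = 1 \<and> w $ j = -2 \<and>
            (\<forall>l. l \<noteq> i \<and> l \<noteq> j \<longrightarrow> w $ l = 0) \<and> c $ j = -1)"
        by (rule int_form[OF dpos ci sc z Wtype[OF that(1)]])
      moreover have "\<not> typeI c" using notI unfolding c_def .
      moreover have "c \<noteq> w" using cnW that(1) by blast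
      ultimately show ?thesis by blast
    qed
    have uniq: "w1 = w2" if w1: "w1 \<in> W" "Jform d (bar d w1) cb = 0" and w2: "w2 \<in> W" "Jform d (bar d w2) cb = 0" for w1 w2
    proof -
      obtain i j where ij: "i \<noteq> j" "w1 $ i = 1" "w1 $ j = -2" "\<forall>l. l \<noteq> i \<and> l \<noteq> j \<longrightarrow> w1 $ l = 0" "c $ j = -1"
        using III[OF w1] by blast
      obtain i' j' where ij': "i' \<noteq> j'" "w2 $ i' = 1" "w2 $ j' = -2" "\<forall>l. l \<noteq> i' \<and> l \<noteq> j' \<longrightarrow> w2 $ l = 0" "c $ j' = -1"
        using III[OF w2] by blast
      have wc1: "(\<Sum>l\<in>UNIV. w1 $ l * c $ l / d $ l) = 1" using Jwc[OF w1(1)] w1(2) by simp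
      have wc2: "(\<Sum>l\<in>UNIV. w2 $ l * c $ l / d $ l) = 1" using Jwc[OF w2(1)] w2(2) by simp
      have "w1 = w2 \<or> (i = i' \<and> j \<noteq> j' \<and> 2 *\<^sub>R c = w1 + w2) \<or> (j = j' \<and> i \<noteq> i' \<and> d $ j \<le> 3)"
        by (rule pair_cases[OF dge1 dnat ci sc cc wc1 wc2 ij ij'])
      then show ?thesis
      proof (elim disjE conjE)
        assume "2 *\<^sub>R c = w1 + w2"
        then show ?thesis using mid_contra[OF vert w1(1) w2(1)] unfolding c_def by blast
      next
        assume h: "j = j'" "i \<noteq> i'" "d $ j \<le> 3"
        have False
          by (rule no_two_III[OF w1(1) ij(1-4) w2(1), of i']) (use ij' h in auto)
        then show ?thesis ..
      qed
    qed
    have c1: "card {w\<in>W. Jform d (bar d w) cb = 0} \<le> 1"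
      by (rule card_subsingleton) (use uniq in blast)
    have c2: "card {\<xi>. \<xi> extreme_point_of (Delta d W cb a \<beta>) \<and> Jform d cb \<xi> = 0} \<le> 1"
      if sh: "sep_hyperplane d W cb a \<beta>" for a \<beta>
    proof -
      have fromW: "\<exists>w\<in>W. Jform d (bar d w) cb = 0 \<and> \<xi> = cproj cb a \<beta> (bar d w)"
        if exx: "\<xi> extreme_point_of (Delta d W cb a \<beta>)" and jz: "Jform d cb \<xi> = 0" for \<xi>
      proof -
        obtain w where w: "w \<in> W" "\<xi> = cproj cb a \<beta> (bar d w)" using Delta_extreme[OF finW sh exx] by blast
        define t where "t = (\<beta> - a \<bullet> cb) / (a \<bullet> bar d w - a \<bullet> cb)"
        have sp1: "a \<bullet> cb < \<beta>" and sp2: "\<beta> < a \<bullet> bar d w"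
          using sh w(1) hull_inc[of "bar d w" "bar d ` W" convex] unfolding sep_hyperplane_def by auto
        have tp: "t > 0" unfolding t_def using sp1 sp2 by simp
        have "\<xi> = cb + t *\<^sub>R (bar d w - cb)" unfolding w(2) cproj_def t_def ..
        then have "Jform d cb \<xi> = Jform d cb cb + t * (Jform d cb (bar d w) - Jform d cb cb)"
          by (simp add: Jlin)
        then have "t * Jform d cb (bar d w) = 0" using jz null by simp
        then have "Jform d (bar d w) cb = 0" using tp Jsym by simp
        then show ?thesis using w by blast
      qed
      show ?thesis
      proof (rule card_subsingleton, intro ballI)
        fix x y assume x: "x \<in> {\<xi>. \<xi> extreme_point_of (Delta d W cb a \<beta>) \<and> Jform d cb \<xi> = 0}"
          and y: "y \<in> {\<xi>. \<xi> extreme_point_of (Delta d W cb a \<beta>) \<and> Jform d cb \<xi> = 0}"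
        obtain w1 where w1: "w1 \<in> W" "Jform d (bar d w1) cb = 0" "x = cproj cb a \<beta> (bar d w1)" using fromW x by blast
        obtain w2 where w2: "w2 \<in> W" "Jform d (bar d w2) cb = 0" "y = cproj cb a \<beta> (bar d w2)" using fromW y by blast
        have "w1 = w2" by (rule uniq[OF w1(1,2) w2(1,2)])
        then show "x = y" using w1(3) w2(3) by simp
      qed
    qed
    show ?thesis using c1 c2 by blast
  qed
  show ?thesis using partA partB unfolding c_def by blast
qed


end
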